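(* For every integer $d \ge 2$, there exists a monoid $H$ in $\mathcal{C}_d$ having full system of sets of lengths, i.e. $\mathcal{L}(H) = \mathbb{P}_{\mathrm{fin}}$.
   Context: Monoids are commutative, cancellative, reduced. $\mathcal{C}_d$ is the collection of all rank-$d$ submonoids of free commutative monoids of finite rank (rank = rank of the Grothendieck group). For an atomic monoid $H$ and $x\in H$, $\mathsf{L}(x)$ is the set of all $n$ such that $x$ is a sum of $n$ atoms; $\mathcal{L}(H)=\{\mathsf{L}(x)\mid x\in H\}$. $\mathbb{P}_{\mathrm{fin}} := \{\{0\},\{1\}\} \cup \{S \subset \mathbb{Z}_{\ge 2} \mid S \text{ finite}\}$. *)

theory Defs
  imports Main
begin

text \<open>Elements of the free commutative monoid of rank n are modelled as functions
  nat => nat vanishing outside {..<n}; addition is pointwise.\<close>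

definition free_elems :: "nat \<Rightarrow> (nat \<Rightarrow> nat) set" where
  "free_elems n = {x. \<forall>i\<ge>n. x i = 0}"

definition vzero :: "nat \<Rightarrow> nat" where
  "vzero = (\<lambda>i. 0)"

definition vadd :: "(nat \<Rightarrow> nat) \<Rightarrow> (nat \<Rightarrow> nat) \<Rightarrow> (nat \<Rightarrow> nat)" where
  "vadd x y = (\<lambda>i. x i + y i)"

definition vsum :: "(nat \<Rightarrow> nat) list \<Rightarrow> (nat \<Rightarrow> nat)" where
  "vsum us = (\<lambda>i. sum_list (map (\<lambda>u. u i) us))"

definition submonoid_free :: "nat \<Rightarrow> (nat \<Rightarrow> nat) set \<Rightarrow> bool" where
  "submonoid_free n H \<longleftrightarrow> H \<subseteq> free_elems n \<and> vzero \<in> H \<and>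
     (\<forall>x\<in>H. \<forall>y\<in>H. vadd x y \<in> H)"

definition int_lin_indep :: "(nat \<Rightarrow> nat) set \<Rightarrow> bool" where
  "int_lin_indep S \<longleftrightarrow> finite S \<and>
     (\<forall>c :: (nat \<Rightarrow> nat) \<Rightarrow> int.
        (\<forall>i. (\<Sum>v\<in>S. c v * int (v i)) = 0) \<longrightarrow> (\<forall>v\<in>S. c v = 0))"

text \<open>The rank of the Grothendieck group of H (the subgroup of Z^n generated by H)
  equals d: the maximal number of Z-linearly independent elements of H is d.\<close>
definition has_rank :: "(nat \<Rightarrow> nat) set \<Rightarrow> nat \<Rightarrow> bool" where
  "has_rank H d \<longleftrightarrow> (\<exists>S\<subseteq>H. int_lin_indep S \<and> card S = d) \<and>
     (\<forall>S\<subseteq>H. int_lin_indep S \<longrightarrow> card S \<le> d)"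

definition atoms :: "(nat \<Rightarrow> nat) set \<Rightarrow> (nat \<Rightarrow> nat) set" where
  "atoms H = {u \<in> H. u \<noteq> vzero \<and> (\<forall>a\<in>H. \<forall>b\<in>H. u = vadd a b \<longrightarrow> a = vzero \<or> b = vzero)}"

definition lengths :: "(nat \<Rightarrow> nat) set \<Rightarrow> (nat \<Rightarrow> nat) \<Rightarrow> nat set" where
  "lengths H x = {k. \<exists>us. length us = k \<and> set us \<subseteq> atoms H \<and> vsum us = x}"

definition system_of_lengths :: "(nat \<Rightarrow> nat) set \<Rightarrow> nat set set" where
  "system_of_lengths H = lengths H ` H"

definition P_fin :: "nat set set" where
  "P_fin = {{0}, {1}} \<union> {S. S \<subseteq> {2..} \<and> finite S \<and> S \<noteq> {}}"

end

theory Submission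
  imports Defs "HOL-Library.Countable"
begin

definition nrm :: "nat \<Rightarrow> (nat \<Rightarrow> nat) \<Rightarrow> nat" where
  "nrm n x = (\<Sum>i<n. x i)"

lemma vsum_Nil[simp]: "vsum [] = vzero"
  by (simp add: vsum_def vzero_def)

lemma vsum_Cons[simp]: "vsum (u # us) = vadd u (vsum us)"
  by (simp add: vsum_def vadd_def)

lemma vsum_append: "vsum (us @ vs) = vadd (vsum us) (vsum vs)"
  by (simp add: vsum_def vadd_def)

lemma vsum_in:
  assumes "submonoid_free n H" "set us \<subseteq> H" shows "vsum us \<in> H"
  using assms(2) proof (induction us)
  case Nil then show ?case using assms(1) by (simp add: submonoid_free_def)
next
  case (Cons u us) then show ?case using assms(1) by (simp add: submonoid_free_def)
qed

lemma nrm_vadd: "nrm n (vadd a b) = nrm n a + nrm n b"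
  by (simp add: nrm_def vadd_def sum.distrib)

lemma nrm_zero_imp: "x \<in> free_elems n \<Longrightarrow> nrm n x = 0 \<Longrightarrow> x = vzero"
  unfolding nrm_def free_elems_def vzero_def
proof (rule ext)
  fix i assume a: "x \<in> {x. \<forall>i\<ge>n. x i = 0}" "(\<Sum>i<n. x i) = 0"
  show "x i = 0"
  proof (cases "i < n")
    case True then show ?thesis using a(2) by simp
  next
    case False then show ?thesis using a(1) by simp
  qed
qed

lemma nrm_vzero[simp]: "nrm n vzero = 0"
  by (simp add: nrm_def vzero_def)

lemma atoms_sub: "atoms H \<subseteq> H" by (auto simp: atoms_def)

lemma length_le_nrm:
  assumes "submonoid_free n H" "set us \<subseteq> atoms H"
  shows "length us \<le> nrm n (vsum us)"
  using assms(2) proof (induction us)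
  case Nil then show ?case by simp
next
  case (Cons u us)
  have "u \<in> H" "u \<noteq> vzero" using Cons.prems by (auto simp: atoms_def)
  then have "u \<in> free_elems n" using assms(1) by (auto simp: submonoid_free_def)
  with \<open>u \<noteq> vzero\<close> have "nrm n u \<noteq> 0" using nrm_zero_imp by blast
  then have "nrm n u \<ge> 1" by simp
  then show ?case using Cons by (simp add: nrm_vadd)
qed

lemma atomic:
  assumes "submonoid_free n H" "x \<in> H"
  shows "\<exists>us. set us \<subseteq> atoms H \<and> vsum us = x"
proof -
  have "\<forall>x. x \<in> H \<longrightarrow> nrm n x = k \<longrightarrow> (\<exists>us. set us \<subseteq> atoms H \<and> vsum us = x)" for k
  proof (induction k rule: less_induct)
    case (less k)
    show ?case
    proof (intro allI impI)
      fix x assume x: "x \<in> H" "nrm n x = k"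
      show "\<exists>us. set us \<subseteq> atoms H \<and> vsum us = x"
      proof (cases "x = vzero")
        case True then show ?thesis by (intro exI[of _ "[]"]) simp
      next
        case False
        show ?thesis
        proof (cases "x \<in> atoms H")
          case True then show ?thesis by (intro exI[of _ "[x]"]) (simp add: vadd_def vzero_def)
        next
          case na: False
          then obtain a b where ab: "a \<in> H" "b \<in> H" "x = vadd a b" "a \<noteq> vzero" "b \<noteq> vzero"
            using x False unfolding atoms_def by blast
          have fa: "a \<in> free_elems n" "b \<in> free_elems n" using ab assms(1) by (auto simp: submonoid_free_def)
          have "nrm n a \<noteq> 0" "nrm n b \<noteq> 0" using ab fa nrm_zero_imp by auto
          then have "nrm n a < k" "nrm n b < k" using x ab by (auto simp: nrm_vadd)
          then obtain ua ub where "set ua \<subseteq> atoms H" "vsum ua = a" "set ub \<subseteq> atoms H" "vsum ub = b"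
            using less.IH ab(1,2) by metis
          then show ?thesis using ab by (intro exI[of _ "ua @ ub"]) (simp add: vsum_append)
        qed
      qed
    qed
  qed
  then show ?thesis using assms by blast
qed

lemma lengths_zero:
  assumes "submonoid_free n H" shows "lengths H vzero = {0}"
proof -
  have "k = 0" if "k \<in> lengths H vzero" for k
    using that length_le_nrm[OF assms] by (force simp: lengths_def)
  moreover have "0 \<in> lengths H vzero" by (auto simp: lengths_def intro!: exI[of _ "[]"])
  ultimately show ?thesis by blast
qed

lemma lengths_atom:
  assumes "submonoid_free n H" "x \<in> atoms H" shows "lengths H x = {1}"
proof -
  have "k = 1" if kL: "k \<in> lengths H x" for k
  proof -
    obtain us where us: "length us = k" "set us \<subseteq> atoms H" "vsum us = x"
      using kL by (auto simp: lengths_def)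
    have xH: "x \<in> H" "x \<noteq> vzero" using assms(2) by (auto simp: atoms_def)
    show ?thesis
    proof (cases us)
      case Nil then show ?thesis using us xH by simp
    next
      case (Cons u rest)
      show ?thesis
      proof (cases rest)
        case Nil then show ?thesis using Cons us by simp
      next
        case (Cons v rest')
        have uH: "u \<in> H" "u \<noteq> vzero" using us \<open>us = u # rest\<close> by (auto simp: atoms_def)
        have rH: "vsum rest \<in> H" using vsum_in[OF assms(1)] us \<open>us = u # rest\<close> atoms_sub by fastforce
        have "length rest \<le> nrm n (vsum rest)" using length_le_nrm[OF assms(1)] us \<open>us = u # rest\<close> by auto
        then have "vsum rest \<noteq> vzero" using Cons by auto
        moreover have "x = vadd u (vsum rest)" using us \<open>us = u # rest\<close> by simp
        ultimately show ?thesis using assms(2) uH rH unfolding atoms_def by blast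
      qed
    qed
  qed
  moreover have "1 \<in> lengths H x" using assms(2)
    by (auto simp: lengths_def vadd_def vzero_def intro!: exI[of _ "[x]"])
  ultimately show ?thesis by blast
qed

lemma system_sub:
  assumes "submonoid_free n H" shows "system_of_lengths H \<subseteq> P_fin"
proof
  fix L assume "L \<in> system_of_lengths H"
  then obtain x where x: "x \<in> H" "L = lengths H x" by (auto simp: system_of_lengths_def)
  show "L \<in> P_fin"
  proof (cases "x = vzero")
    case True then show ?thesis using x lengths_zero[OF assms] by (simp add: P_fin_def)
  next
    case nz: False
    show ?thesis
    proof (cases "x \<in> atoms H")
      case True then show ?thesis using x lengths_atom[OF assms] by (simp add: P_fin_def)
    next
      case na: False
      have fin: "L \<subseteq> {..nrm n x}" using x length_le_nrm[OF assms] by (auto simp: lengths_def)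
      have ne: "L \<noteq> {}" using atomic[OF assms x(1)] x by (auto simp: lengths_def)
      have "k \<ge> 2" if kL: "k \<in> L" for k
      proof -
        obtain us where us: "length us = k" "set us \<subseteq> atoms H" "vsum us = x"
          using kL x by (auto simp: lengths_def)
        have "k \<noteq> 0" using us nz by auto
        moreover have "k \<noteq> 1" using us na by (auto simp: vadd_def vzero_def length_Suc_conv)
        ultimately show ?thesis by simp
      qed
      then show ?thesis using fin ne finite_subset unfolding P_fin_def by blast
    qed
  qed
qed


definition Aof :: "nat \<Rightarrow> nat \<Rightarrow> nat set \<Rightarrow> nat set" where
  "Aof B M S = {B*B} \<union> (\<lambda>s. B*B + (M+1+s)*B) ` S \<union> (\<lambda>s. (M+1-s)*B*B + (2*(M+1)-s)*B + 1) ` S"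

definition Xof :: "nat \<Rightarrow> nat \<Rightarrow> nat" where
  "Xof B M = M*B*B + 3*(M+1)*B + 1"

lemma dig:
  fixes B t w z :: nat
  assumes "w < B" "z < B"
  shows "(t*B*B + w*B + z) div (B*B) = t \<and> (t*B*B + w*B + z) div B mod B = w \<and> (t*B*B + w*B + z) mod B = z"
proof -
  have B0: "B > 0" using assms by simp
  have m: "(t*B*B + w*B + z) mod B = z"
    using assms by (metis mod_mult_self3 mod_less mult.assoc mult.commute add.commute add.left_commute distrib_right)
  have d: "(t*B*B + w*B + z) div B = t*B + w"
  proof -
    have "t*B*B + w*B + z = z + (t*B + w)*B" by (simp add: algebra_simps)
    then show ?thesis using assms B0 by simp
  qed
  have d2: "(t*B + w) div B = t" "(t*B + w) mod B = w"
    using assms B0 by simp_all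
  have "(t*B*B + w*B + z) div (B*B) = (t*B*B + w*B + z) div B div B" by (simp add: div_mult2_eq)
  then show ?thesis using m d d2 by simp
qed

lemma decomp:
  fixes B g :: nat
  shows "g = g div (B*B) * (B*B) + (g div B mod B) * B + g mod B"
proof -
  have "g div (B*B) = g div B div B" by (simp add: div_mult2_eq)
  moreover have "g div B = g div B div B * B + g div B mod B" by simp
  moreover have "g = g div B * B + g mod B" by simp
  ultimately show ?thesis by (metis add_mult_distrib mult.assoc)
qed

lemma len_lower:
  fixes f :: "'a \<Rightarrow> nat"
  shows "(\<forall>x\<in>set xs. c \<le> f x) \<Longrightarrow> length xs * c \<le> sum_list (map f xs)"
  by (induction xs) (auto simp: add_mono)

lemma len_upper:
  fixes f :: "'a \<Rightarrow> nat"
  shows "(\<forall>x\<in>set xs. f x \<le> c) \<Longrightarrow> sum_list (map f xs) \<le> length xs * c"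
  by (induction xs) (auto simp: add_mono)

lemma sum_one:
  fixes p f :: "'a \<Rightarrow> nat"
  shows "(\<forall>x\<in>set xs. p x \<le> 1) \<Longrightarrow> sum_list (map p xs) = 1 \<Longrightarrow>
    \<exists>x\<in>set xs. p x = 1 \<and> sum_list (map (\<lambda>x. p x * f x) xs) = f x"
proof (induction xs)
  case Nil then show ?case by simp
next
  case (Cons y ys)
  show ?case
  proof (cases "p y = 1")
    case True
    then have "sum_list (map p ys) = 0" using Cons.prems by simp
    then have "\<forall>x\<in>set ys. p x = 0" by simp
    then have "sum_list (map (\<lambda>x. p x * f x) ys) = 0" by (simp add: sum_list_eq_0_iff)
    then show ?thesis using True by auto
  next
    case False
    then have "p y = 0" using Cons.prems by fastforce
    then show ?thesis using Cons by auto
  qed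
qed

lemma sum_gap:
  fixes f :: "'a \<Rightarrow> nat"
  shows "(\<forall>x\<in>set xs. f x = 0 \<or> W \<le> f x) \<Longrightarrow> sum_list (map f xs) < W \<Longrightarrow> sum_list (map f xs) = 0"
proof (induction xs)
  case Nil then show ?case by simp
next
  case (Cons y ys) then show ?case by fastforce
qed

lemma sum_decomp:
  fixes B :: nat
  shows "sum_list gs = sum_list (map (\<lambda>g. g div (B*B)) gs) * (B*B) + sum_list (map (\<lambda>g. g div B mod B) gs) * B
     + sum_list (map (\<lambda>g. g mod B) gs)"
proof (induction gs)
  case Nil then show ?case by simp
next
  case (Cons g gs)
  have "g = g div (B*B) * (B*B) + (g div B mod B) * B + g mod B" by (rule decomp)
  then show ?case using Cons by (simp add: algebra_simps)
qed

context
  fixes B M :: nat and S :: "nat set"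
  assumes SM: "S \<subseteq> {2..M}" and M2: "2 \<le> M" and BB: "4*(M+1)*(M+1) \<le> B"
begin

lemma B4: "4*(M+1) \<le> B"
proof -
  have "4*(M+1)*1 \<le> 4*(M+1)*(M+1)" by (rule mult_le_mono2) simp
  then show ?thesis using BB by simp
qed

lemma B_big: "3*(M+1) < B" "M*(2*(M+1)) < B" "M < B" "1 < B"
proof -
  have "3*(M+1) < 4*(M+1)" by simp
  then show "3*(M+1) < B" using B4 by (rule less_le_trans)
  have "M*(2*(M+1)) < (M+1)*(2*(M+1))" by (rule mult_less_mono1) auto
  also have "\<dots> \<le> 4*(M+1)*(M+1)" by (simp add: algebra_simps)
  finally show "M*(2*(M+1)) < B" using BB by linarith
  have "M < 3*(M+1)" "1 < 3*(M+1)" by simp_all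
  then show "M < B" "1 < B" using \<open>3*(M+1) < B\<close> by (meson less_trans)+
qed

lemma Xof_lt: "Xof B M < (M+1)*(B*B)"
proof -
  have "(3*(M+1)+1)*B \<le> B*B" using B_big(1) by (intro mult_le_mono1) simp
  then have "3*(M+1)*B + 1 < B*B" using B_big(4) by (simp add: algebra_simps)
  then show ?thesis unfolding Xof_def by (simp add: algebra_simps)
qed

lemma Xof_dig: "Xof B M div (B*B) = M" "Xof B M div B mod B = 3*(M+1)" "Xof B M mod B = 1"
  using dig[of "3*(M+1)" B 1 M] B_big unfolding Xof_def by auto

lemma elem:
  assumes "g \<in> Aof B M S"
  shows "B*B \<le> g" "g \<le> Xof B M" "g mod B \<le> 1" "1 \<le> g div (B*B)" "g div B mod B \<le> 2*(M+1)"
    "g mod B = 0 \<Longrightarrow> g div (B*B) = 1 \<and> (g div B mod B = 0 \<or> M+1 \<le> g div B mod B)"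
    "g mod B = 1 \<Longrightarrow> \<exists>s\<in>S. g div (B*B) = M+1-s \<and> g div B mod B = 2*(M+1) - s"
proof -
  note bb = B_big
  consider (e) "g = B*B" | (b) s where "s \<in> S" "g = B*B + (M+1+s)*B"
    | (c) s where "s \<in> S" "g = (M+1-s)*B*B + (2*(M+1)-s)*B + 1"
    using assms unfolding Aof_def by blast
  then have all: "B*B \<le> g \<and> g \<le> Xof B M \<and> g mod B \<le> 1 \<and> 1 \<le> g div (B*B) \<and> g div B mod B \<le> 2*(M+1) \<and>
    (g mod B = 0 \<longrightarrow> g div (B*B) = 1 \<and> (g div B mod B = 0 \<or> M+1 \<le> g div B mod B)) \<and>
    (g mod B = 1 \<longrightarrow> (\<exists>s\<in>S. g div (B*B) = M+1-s \<and> g div B mod B = 2*(M+1) - s))"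
  proof cases
    case e
    have "g = 1*B*B + 0*B + 0" using e by simp
    then have D: "g div (B*B) = 1" "g div B mod B = 0" "g mod B = 0" using dig[of 0 B 0 1] bb by auto
    have "B*B \<le> M*(B*B)" using M2 by simp
    moreover have "M*(B*B) \<le> Xof B M" unfolding Xof_def by (simp add: mult.assoc)
    ultimately have "B*B \<le> Xof B M" by (rule le_trans)
    then show ?thesis using D e by simp
  next
    case (b s)
    have s: "2 \<le> s" "s \<le> M" using b SM by auto
    have "g = 1*B*B + (M+1+s)*B + 0" using b by simp
    then have D: "g div (B*B) = 1" "g div B mod B = M+1+s" "g mod B = 0" using dig[of "M+1+s" B 0 1] bb s by auto
    have "B*B \<le> M*(B*B)" using M2 by simp
    moreover have "(M+1+s)*B \<le> 3*(M+1)*B" using s by (intro mult_le_mono1) simp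
    ultimately have "g \<le> Xof B M" unfolding Xof_def b by (simp only: mult.assoc)
    then show ?thesis using D b s by auto
  next
    case (c s)
    have s: "2 \<le> s" "s \<le> M" using c SM by auto
    have D: "g div (B*B) = M+1-s" "g div B mod B = 2*(M+1)-s" "g mod B = 1"
      using dig[of "2*(M+1)-s" B 1 "M+1-s"] bb s c by auto
    have "(M+1-s)*(B*B) \<le> M*(B*B)" using s by (intro mult_le_mono1) simp
    moreover have "(2*(M+1)-s)*B \<le> 3*(M+1)*B" using s by (intro mult_le_mono1) simp
    ultimately have "g \<le> Xof B M" unfolding Xof_def c by (simp only: mult.assoc)
    moreover have "B*B \<le> g"
    proof -
      have "1*B*B \<le> (M+1-s)*B*B" using s by (intro mult_le_mono) auto
      then show ?thesis using c by linarith
    qed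
    moreover have "1 \<le> M+1-s" using s by simp
    ultimately show ?thesis using D c s by auto
  qed
  then show "B*B \<le> g" "g \<le> Xof B M" "g mod B \<le> 1" "1 \<le> g div (B*B)" "g div B mod B \<le> 2*(M+1)"
    "g mod B = 0 \<Longrightarrow> g div (B*B) = 1 \<and> (g div B mod B = 0 \<or> M+1 \<le> g div B mod B)"
    "g mod B = 1 \<Longrightarrow> \<exists>s\<in>S. g div (B*B) = M+1-s \<and> g div B mod B = 2*(M+1) - s"
    by (blast, blast, blast, blast, blast, meson, meson)
qed

lemma sumdig:
  assumes gs: "set gs \<subseteq> Aof B M S" and V: "sum_list gs = V" "V \<le> Xof B M"
  shows "length gs \<le> M" "sum_list (map (\<lambda>g. g div (B*B)) gs) = V div (B*B)"
    "sum_list (map (\<lambda>g. g div B mod B) gs) = V div B mod B"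
    "sum_list (map (\<lambda>g. g mod B) gs) = V mod B"
proof -
  have "length gs * (B*B) \<le> sum_list (map (\<lambda>g. g) gs)"
    using gs elem(1) by (intro len_lower) auto
  then have "length gs * (B*B) < (M+1) * (B*B)" using V Xof_lt by simp
  then show L: "length gs \<le> M" by (metis Suc_eq_plus1 less_Suc_eq_le mult_less_cancel2)
  have z: "sum_list (map (\<lambda>g. g mod B) gs) < B"
  proof -
    have "sum_list (map (\<lambda>g. g mod B) gs) \<le> length gs * 1" using gs elem(3) by (intro len_upper) auto
    then show ?thesis using L B_big by linarith
  qed
  have w: "sum_list (map (\<lambda>g. g div B mod B) gs) < B"
  proof -
    have "sum_list (map (\<lambda>g. g div B mod B) gs) \<le> length gs * (2*(M+1))" using gs elem(5) by (intro len_upper) auto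
    also have "\<dots> \<le> M * (2*(M+1))" using L by (rule mult_le_mono1)
    finally show ?thesis using B_big(2) by linarith
  qed
  have "V = sum_list (map (\<lambda>g. g div (B*B)) gs) * B * B + sum_list (map (\<lambda>g. g div B mod B) gs) * B
     + sum_list (map (\<lambda>g. g mod B) gs)" using sum_decomp[of gs B] V by (simp add: mult.assoc)
  then show "sum_list (map (\<lambda>g. g div (B*B)) gs) = V div (B*B)"
    "sum_list (map (\<lambda>g. g div B mod B) gs) = V div B mod B"
    "sum_list (map (\<lambda>g. g mod B) gs) = V mod B"
    using dig[OF w z, of "sum_list (map (\<lambda>g. g div (B*B)) gs)"] by simp_all
qed


lemma achieve:
  assumes sS: "s \<in> S"
  shows "\<exists>gs. set gs \<subseteq> Aof B M S \<and> sum_list gs = Xof B M \<and> length gs = s"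
proof -
  have s: "2 \<le> s" "s \<le> M" using sS SM by auto
  obtain j where j: "s = j + 2" using s(1) by (metis add.commute le_Suc_ex add_2_eq_Suc')
  obtain k where k: "M = s + k" using s(2) le_Suc_ex by (metis le_iff_add)
  define gs where "gs = ((M+1-s)*B*B + (2*(M+1)-s)*B + 1) # (B*B + (M+1+s)*B) # replicate (s-2) (B*B)"
  have "set gs \<subseteq> Aof B M S" unfolding gs_def Aof_def using sS by auto
  moreover have "length gs = s" unfolding gs_def using s by simp
  moreover have "sum_list gs = Xof B M"
  proof -
    have e1: "M+1-s = k+1" "2*(M+1)-s = j+2+2*k+2" "s - 2 = j" "M+1+s = j+2+k+1+j+2" using j k by simp_all
    show ?thesis unfolding gs_def Xof_def using e1 j k by (simp add: sum_list_replicate algebra_simps)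
  qed
  ultimately show ?thesis by blast
qed

lemma len_X:
  assumes gs: "set gs \<subseteq> Aof B M S" and V: "sum_list gs = Xof B M"
  shows "length gs \<in> S"
proof -
  have D: "sum_list (map (\<lambda>g. g div (B*B)) gs) = M" "sum_list (map (\<lambda>g. g mod B) gs) = 1"
    using sumdig[OF gs V] Xof_dig by simp_all
  have p1: "\<forall>g\<in>set gs. g mod B \<le> 1" using gs elem(3) by blast
  obtain g0 where g0: "g0 \<in> set gs" "g0 mod B = 1"
    "sum_list (map (\<lambda>g. g mod B * (g div (B*B))) gs) = g0 div (B*B)"
    using sum_one[OF p1 D(2), of "\<lambda>g. g div (B*B)"] by blast
  obtain s where s: "s \<in> S" "g0 div (B*B) = M+1-s" using elem(7)[of g0] g0 gs by blast
  have "map (\<lambda>g. g div (B*B)) gs = map (\<lambda>g. (1 - g mod B) + g mod B * (g div (B*B))) gs"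
  proof (rule map_cong)
    fix g assume g: "g \<in> set gs"
    then have "g mod B = 0 \<or> g mod B = 1" using p1 by fastforce
    then show "g div (B*B) = (1 - g mod B) + g mod B * (g div (B*B))"
      using elem(6)[of g] g gs by auto
  qed simp
  then have "sum_list (map (\<lambda>g. g div (B*B)) gs) = sum_list (map (\<lambda>g. 1 - g mod B) gs) + sum_list (map (\<lambda>g. g mod B * (g div (B*B))) gs)"
    by (simp only: sum_list_addf)
  then have T: "M = sum_list (map (\<lambda>g. 1 - g mod B) gs) + g0 div (B*B)"
    using D(1) g0(3) by simp
  have "map (\<lambda>g. (1 - g mod B) + g mod B) gs = map (\<lambda>g. 1) gs"
    using p1 by (intro map_cong) fastforce+
  then have "sum_list (map (\<lambda>g. 1 - g mod B) gs) + sum_list (map (\<lambda>g. g mod B) gs) = sum_list (map (\<lambda>g. 1) gs)"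
    by (simp only: sum_list_addf[symmetric])
  then have "sum_list (map (\<lambda>g. 1 - g mod B) gs) + 1 = length gs"
    using D(2) by (simp add: sum_list_triv)
  moreover have "s \<le> M" using s SM by auto
  ultimately have "length gs = s" using T s by linarith
  then show ?thesis using s by simp
qed

lemma prim:
  assumes a: "a \<in> Aof B M S" and gs: "set gs \<subseteq> Aof B M S" and V: "sum_list gs = a"
  shows "length gs = 1"
proof -
  have aX: "a \<le> Xof B M" using elem(2)[OF a] .
  note SD = sumdig[OF gs V aX]
  have p1: "\<forall>g\<in>set gs. g mod B \<le> 1" using gs elem(3) by blast
  have "gs \<noteq> []"
  proof
    assume "gs = []"
    then have "a = 0" using V by simp
    moreover have "B*B \<le> a" using elem(1)[OF a] .
    ultimately show False using B_big(4) by simp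
  qed
  then have len1: "1 \<le> length gs" by (cases gs) auto
  have lt: "length gs \<le> sum_list (map (\<lambda>g. g div (B*B)) gs)"
    using len_lower[of gs 1 "\<lambda>g. g div (B*B)"] gs elem(4) by auto
  have "a mod B = 0 \<or> a mod B = 1" using elem(3)[OF a] by auto
  then show ?thesis
  proof
    assume a0: "a mod B = 0"
    have "a div (B*B) = 1" using elem(6)[OF a a0] by (rule conjunct1)
    then show ?thesis using lt SD(2) len1 by simp
  next
    assume az: "a mod B = 1"
    obtain s where s: "s \<in> S" "a div (B*B) = M+1-s" "a div B mod B = 2*(M+1) - s"
      using elem(7)[OF a az] by blast
    have Dz: "sum_list (map (\<lambda>g. g mod B) gs) = 1" using SD(4) az by simp
    obtain g0 where g0: "g0 \<in> set gs" "g0 mod B = 1"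
      "sum_list (map (\<lambda>g. g mod B * (g div (B*B))) gs) = g0 div (B*B)"
      using sum_one[OF p1 Dz, of "\<lambda>g. g div (B*B)"] by blast
    have g0w: "sum_list (map (\<lambda>g. g mod B * (g div B mod B)) gs) = g0 div B mod B"
    proof -
      obtain g1 where g1: "g1 \<in> set gs" "g1 mod B = 1"
        "sum_list (map (\<lambda>g. g mod B * (g div B mod B)) gs) = g1 div B mod B"
        using sum_one[OF p1 Dz, of "\<lambda>g. g div B mod B"] by blast
      have "g1 = g0"
      proof (rule ccontr)
        assume ne: "g1 \<noteq> g0"
        obtain xs ys where "gs = xs @ g0 # ys" using g0(1) by (meson split_list)
        then have "g1 \<in> set xs \<or> g1 \<in> set ys" using g1(1) ne by auto
        then have "sum_list (map (\<lambda>g. g mod B) gs) \<ge> 2"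
          using \<open>gs = xs @ g0 # ys\<close> g0(2) g1(2)
          by (auto dest!: split_list simp: sum_list_addf)
        then show False using Dz by simp
      qed
      then show ?thesis using g1 by simp
    qed
    obtain s' where s': "s' \<in> S" "g0 div (B*B) = M+1-s'" "g0 div B mod B = 2*(M+1) - s'"
      using elem(7)[of g0] g0 gs by blast
    have sM: "2 \<le> s" "s \<le> M" "2 \<le> s'" "s' \<le> M" using s s' SM by auto
    have "map (\<lambda>g. g div (B*B)) gs = map (\<lambda>g. (1 - g mod B) + g mod B * (g div (B*B))) gs"
    proof (rule map_cong)
      fix g assume g: "g \<in> set gs"
      then have "g mod B = 0 \<or> g mod B = 1" using p1 by fastforce
      then show "g div (B*B) = (1 - g mod B) + g mod B * (g div (B*B))"
        using elem(6)[of g] g gs by auto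
    qed simp
    then have "sum_list (map (\<lambda>g. g div (B*B)) gs) = sum_list (map (\<lambda>g. 1 - g mod B) gs) + sum_list (map (\<lambda>g. g mod B * (g div (B*B))) gs)"
      by (simp only: sum_list_addf)
    then have T: "M+1-s = sum_list (map (\<lambda>g. 1 - g mod B) gs) + (M+1-s')"
      using SD(2) s(2) g0(3) s'(2) by simp
    have "map (\<lambda>g. (1 - g mod B) + g mod B) gs = map (\<lambda>g. 1) gs"
      using p1 by (intro map_cong) fastforce+
    then have "sum_list (map (\<lambda>g. 1 - g mod B) gs) + sum_list (map (\<lambda>g. g mod B) gs) = sum_list (map (\<lambda>g. 1) gs)"
      by (simp only: sum_list_addf[symmetric])
    then have C: "sum_list (map (\<lambda>g. 1 - g mod B) gs) + 1 = length gs"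
      using Dz by (simp add: sum_list_triv)
    have "map (\<lambda>g. g div B mod B) gs = map (\<lambda>g. (1 - g mod B) * (g div B mod B) + g mod B * (g div B mod B)) gs"
    proof (rule map_cong)
      fix g assume g: "g \<in> set gs"
      then have "g mod B = 0 \<or> g mod B = 1" using p1 by fastforce
      then show "g div B mod B = (1 - g mod B) * (g div B mod B) + g mod B * (g div B mod B)" by auto
    qed simp
    then have "sum_list (map (\<lambda>g. g div B mod B) gs) = sum_list (map (\<lambda>g. (1 - g mod B) * (g div B mod B)) gs) + sum_list (map (\<lambda>g. g mod B * (g div B mod B)) gs)"
      by (simp only: sum_list_addf)
    then have Wq: "2*(M+1) - s = sum_list (map (\<lambda>g. (1 - g mod B) * (g div B mod B)) gs) + (2*(M+1) - s')"
      using SD(3) s(3) g0w s'(3) by simp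
    have gap: "\<forall>g\<in>set gs. (1 - g mod B) * (g div B mod B) = 0 \<or> M+1 \<le> (1 - g mod B) * (g div B mod B)"
    proof
      fix g assume g: "g \<in> set gs"
      then have "g mod B = 0 \<or> g mod B = 1" using p1 by fastforce
      then show "(1 - g mod B) * (g div B mod B) = 0 \<or> M+1 \<le> (1 - g mod B) * (g div B mod B)"
        using elem(6)[of g] g gs by auto
    qed
    have "sum_list (map (\<lambda>g. (1 - g mod B) * (g div B mod B)) gs) < M+1" using Wq sM by linarith
    then have "sum_list (map (\<lambda>g. (1 - g mod B) * (g div B mod B)) gs) = 0" using sum_gap[OF gap] by blast
    then have "s = s'" using Wq sM by arith
    then show ?thesis using T C sM by linarith
  qed
qed

end


lemma dep:
  "finite I \<Longrightarrow> n < card I \<Longrightarrow> (\<forall>j\<in>I. \<forall>i\<ge>n. f j i = (0::int)) \<Longrightarrow>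
   \<exists>c. (\<forall>i. (\<Sum>j\<in>I. c j * f j i) = 0) \<and> (\<exists>j\<in>I. c j \<noteq> 0)"
proof (induction n arbitrary: I f)
  case 0
  then obtain j0 where "j0 \<in> I" by fastforce
  moreover have "\<forall>i. (\<Sum>j\<in>I. (if j = j0 then 1 else 0) * f j i) = 0" using 0 by simp
  ultimately show ?case by (intro exI[of _ "\<lambda>j. if j = j0 then 1 else 0"]) auto
next
  case (Suc n)
  show ?case
  proof (cases "\<forall>j\<in>I. f j n = 0")
    case True
    have "\<forall>j\<in>I. \<forall>i\<ge>n. f j i = 0"
      using True Suc.prems(3) by (metis Suc_leI le_neq_implies_less)
    then show ?thesis using Suc.IH[OF Suc.prems(1)] Suc.prems(2) by simp
  next
    case False
    then obtain k where k: "k \<in> I" "f k n \<noteq> 0" by blast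
    define a where "a = f k n"
    define g where "g j i = a * f j i - f j n * f k i" for j i
    define I' where "I' = I - {k}"
    have fI': "finite I'" using Suc.prems(1) by (simp add: I'_def)
    have cI': "n < card I'" using Suc.prems(1,2) k(1) by (simp add: I'_def)
    have gz: "\<forall>j\<in>I'. \<forall>i\<ge>n. g j i = 0"
    proof (intro ballI allI impI)
      fix j i assume j: "j \<in> I'" and i: "n \<le> i"
      show "g j i = 0"
      proof (cases "i = n")
        case True then show ?thesis by (simp add: g_def a_def)
      next
        case False
        then have "Suc n \<le> i" using i by simp
        then show ?thesis using Suc.prems(3) j k(1) by (simp add: g_def I'_def)
      qed
    qed
    obtain c' where c': "\<forall>i. (\<Sum>j\<in>I'. c' j * g j i) = 0" "\<exists>j\<in>I'. c' j \<noteq> 0"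
      using Suc.IH[OF fI' cI' gz] by blast
    define c where "c j = (if j = k then - (\<Sum>j\<in>I'. c' j * f j n) else a * c' j)" for j
    have "(\<Sum>j\<in>I. c j * f j i) = 0" for i
    proof -
      have "(\<Sum>j\<in>I. c j * f j i) = c k * f k i + (\<Sum>j\<in>I'. c j * f j i)"
        using Suc.prems(1) k(1) unfolding I'_def by (simp add: sum.remove)
      also have "(\<Sum>j\<in>I'. c j * f j i) = (\<Sum>j\<in>I'. a * c' j * f j i)"
        by (rule sum.cong) (auto simp: c_def I'_def)
      also have "c k * f k i = - (\<Sum>j\<in>I'. c' j * f j n * f k i)"
        by (simp add: c_def sum_distrib_right)
      finally have "(\<Sum>j\<in>I. c j * f j i) = (\<Sum>j\<in>I'. a * c' j * f j i) - (\<Sum>j\<in>I'. c' j * f j n * f k i)"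
        by simp
      also have "\<dots> = (\<Sum>j\<in>I'. c' j * g j i)"
        by (simp add: g_def sum_subtractf[symmetric] algebra_simps)
      finally show ?thesis using c'(1) by simp
    qed
    moreover have "\<exists>j\<in>I. c j \<noteq> 0"
      using c'(2) k(2) by (auto simp: c_def I'_def a_def)
    ultimately show ?thesis by blast
  qed
qed

lemma rank_le:
  assumes "S \<subseteq> free_elems d" "int_lin_indep S"
  shows "card S \<le> d"
proof (rule ccontr)
  assume "\<not> card S \<le> d"
  then have lt: "d < card S" by simp
  have fin: "finite S" using assms(2) by (simp add: int_lin_indep_def)
  have "\<forall>j\<in>S. \<forall>i\<ge>d. int (j i) = 0" using assms(1) by (auto simp: free_elems_def)
  then obtain c where "\<forall>i. (\<Sum>j\<in>S. c j * int (j i)) = 0" "\<exists>j\<in>S. c j \<noteq> 0"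
    using dep[OF fin lt, of "\<lambda>j i. int (j i)"] by blast
  then show False using assms(2) by (auto simp: int_lin_indep_def)
qed


definition Sset :: "nat \<Rightarrow> nat set" where
  "Sset c = (\<lambda>i. i + 2) ` insert (fst (from_nat c :: nat \<times> nat list)) (set (snd (from_nat c :: nat \<times> nat list)))"

definition Mx :: "nat \<Rightarrow> nat" where "Mx c = Max (Sset c)"

definition baseB :: "nat \<Rightarrow> nat" where "baseB c = 4*(Mx c+1)*(Mx c+1)"

primrec Bc :: "nat \<Rightarrow> nat" where
  "Bc 0 = baseB 0"
| "Bc (Suc c) = baseB (Suc c) + Xof (Bc c) (Mx c)"

definition Aset :: "nat \<Rightarrow> nat set" where "Aset c = Aof (Bc c) (Mx c) (Sset c)"
definition Xv :: "nat \<Rightarrow> nat" where "Xv c = Xof (Bc c) (Mx c)"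

definition gen :: "nat \<Rightarrow> nat \<Rightarrow> (nat \<Rightarrow> nat)" where
  "gen c g = (\<lambda>i. if i = 0 then g else if i = 1 then c*g else 0)"

definition Gset :: "(nat \<Rightarrow> nat) set" where "Gset = {gen c g | c g. g \<in> Aset c}"

definition Hd :: "nat \<Rightarrow> (nat \<Rightarrow> nat) set" where
  "Hd d = {x \<in> free_elems d. \<exists>us. set us \<subseteq> Gset \<and> x 0 = vsum us 0 \<and> x 1 = vsum us 1}"

lemma Sset_ge2: "x \<in> Sset c \<Longrightarrow> 2 \<le> x"
  unfolding Sset_def by auto

lemma Sset_props: "finite (Sset c)" "Sset c \<noteq> {}" "Sset c \<subseteq> {2..Mx c}" "2 \<le> Mx c"
proof -
  show f: "finite (Sset c)" "Sset c \<noteq> {}" unfolding Sset_def by simp_all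
  show "Sset c \<subseteq> {2..Mx c}"
  proof
    fix x assume x: "x \<in> Sset c"
    have "x \<le> Mx c" unfolding Mx_def using Max_ge[OF f(1) x] .
    then show "x \<in> {2..Mx c}" using Sset_ge2[OF x] by simp
  qed
  obtain x where x: "x \<in> Sset c" using f by blast
  have "x \<le> Mx c" unfolding Mx_def using Max_ge[OF f(1) x] .
  then show "2 \<le> Mx c" using Sset_ge2[OF x] by simp
qed

lemma Sset_surj:
  assumes "S \<subseteq> {2..}" "finite S" "S \<noteq> {}"
  shows "\<exists>c. Sset c = S"
proof -
  obtain l where l: "set l = (\<lambda>s. s - 2) ` S" using finite_list[OF finite_imageI[OF assms(2), of "\<lambda>s. s - 2"]] by blast
  then have "l \<noteq> []" using assms(3) by (metis empty_set image_is_empty)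
  then obtain x xs where xs: "l = x # xs" by (cases l) simp_all
  have "Sset (to_nat (x, xs)) = (\<lambda>i. i + 2) ` set l" unfolding Sset_def xs by simp
  also have "\<dots> = (\<lambda>s. s - 2 + 2) ` S" unfolding l image_image ..
  also have "\<dots> = (\<lambda>s. s) ` S"
  proof (rule image_cong)
    fix s assume "s \<in> S" then have "2 \<le> s" using assms(1) by auto
    then show "s - 2 + 2 = s" by simp
  qed simp
  also have "\<dots> = S" by simp
  finally show ?thesis by blast
qed

lemma Bc_ge: "baseB c \<le> Bc c" by (cases c) simp_all

lemma baseB_pos: "1 \<le> baseB c"
  unfolding baseB_def by simp

lemma ctx: "Sset c \<subseteq> {2..Mx c}" "2 \<le> Mx c" "4*(Mx c+1)*(Mx c+1) \<le> Bc c"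
proof -
  show "Sset c \<subseteq> {2..Mx c}" by (rule Sset_props(3))
  show "2 \<le> Mx c" by (rule Sset_props(4))
  show "4*(Mx c+1)*(Mx c+1) \<le> Bc c" using Bc_ge[of c] unfolding baseB_def .
qed

lemma Bc_pos: "1 \<le> Bc c"
  using baseB_pos[of c] Bc_ge[of c] by (rule le_trans)

lemma Xv_lt: "Xv c < Bc (Suc c)"
proof -
  have "Bc (Suc c) = baseB (Suc c) + Xv c" by (simp add: Xv_def)
  then show ?thesis using baseB_pos[of "Suc c"] by linarith
qed

lemma Bc_lt: "Bc c < Bc (Suc c)"
proof -
  have "Bc c \<le> 3*(Mx c+1)*Bc c" by simp
  then have "Bc c \<le> Xv c" unfolding Xv_def Xof_def by linarith
  then show ?thesis using Xv_lt by (rule le_less_trans)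
qed

lemma sep: "c < c' \<Longrightarrow> Xv c < Bc c' * Bc c'"
proof -
  assume "c < c'"
  then have "Suc c \<le> c'" by simp
  have "strict_mono Bc" using Bc_lt by (simp add: strict_mono_Suc_iff)
  then have "Bc (Suc c) \<le> Bc c'" using \<open>Suc c \<le> c'\<close> by (metis strict_mono_less_eq)
  moreover have "Bc c' \<le> Bc c' * Bc c'" using Bc_pos[of c'] by simp
  ultimately show ?thesis using Xv_lt[of c] by linarith
qed

lemma A_bounds: "g \<in> Aset c \<Longrightarrow> Bc c * Bc c \<le> g \<and> g \<le> Xv c \<and> 0 < g"
proof -
  assume g: "g \<in> Aset c"
  have a: "Bc c * Bc c \<le> g" "g \<le> Xv c" using elem(1,2)[OF ctx, of g c] g unfolding Aset_def Xv_def by auto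
  have p: "0 < Bc c * Bc c" using Bc_pos[of c] by simp
  have "0 < g" using p a(1) by (rule less_le_trans)
  then show ?thesis using a by simp
qed

lemma gen_nz: "0 < g \<Longrightarrow> gen c g \<noteq> vzero"
  by (auto simp: gen_def vzero_def fun_eq_iff)

lemma vsum_map_gen: "vsum (map (gen c) gs) = gen c (sum_list gs)"
  by (induction gs) (auto simp: vadd_def gen_def fun_eq_iff algebra_simps vzero_def)

lemma gen_inj: "gen c a = gen c b \<Longrightarrow> a = b"
  by (drule fun_cong[of _ _ 0]) (simp add: gen_def)

lemma G_form: "w \<in> Gset \<Longrightarrow> w = gen (w 1 div w 0) (w 0) \<and> w 0 \<in> Aset (w 1 div w 0) \<and> 0 < w 0"
proof -
  assume "w \<in> Gset"
  then obtain c g where cg: "w = gen c g" "g \<in> Aset c" unfolding Gset_def by blast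
  then have "0 < g" using A_bounds by blast
  then show ?thesis using cg by (simp add: gen_def)
qed

lemma G_high: "w \<in> Gset \<Longrightarrow> 2 \<le> i \<Longrightarrow> w i = 0"
  by (auto simp: Gset_def gen_def)

lemma vsum_high: "set us \<subseteq> Gset \<Longrightarrow> 2 \<le> i \<Longrightarrow> vsum us i = 0"
proof (induction us)
  case Nil then show ?case by (simp add: vzero_def)
next
  case (Cons u us)
  then have "u i = 0" using G_high by auto
  then show ?case using Cons by (simp add: vadd_def)
qed

lemma free_vadd: "x \<in> free_elems d \<Longrightarrow> y \<in> free_elems d \<Longrightarrow> vadd x y \<in> free_elems d"
  by (simp add: free_elems_def vadd_def)

lemma Hd_sub: assumes "2 \<le> d" shows "submonoid_free d (Hd d)"
  unfolding submonoid_free_def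
proof (intro conjI ballI)
  show "Hd d \<subseteq> free_elems d" by (auto simp: Hd_def)
  have "vzero \<in> free_elems d" by (simp add: free_elems_def vzero_def)
  moreover have "vzero 0 = vsum [] 0" "vzero 1 = vsum [] 1" by simp_all
  ultimately show "vzero \<in> Hd d" unfolding Hd_def
    by (metis (mono_tags, lifting) empty_set empty_subsetI mem_Collect_eq)
  fix x y assume x: "x \<in> Hd d" and y: "y \<in> Hd d"
  obtain us where us: "set us \<subseteq> Gset" "x 0 = vsum us 0" "x 1 = vsum us 1" using x by (auto simp: Hd_def)
  obtain vs where vs: "set vs \<subseteq> Gset" "y 0 = vsum vs 0" "y 1 = vsum vs 1" using y by (auto simp: Hd_def)
  have "vadd x y \<in> free_elems d" using x y free_vadd by (auto simp: Hd_def)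
  moreover have "set (us @ vs) \<subseteq> Gset" using us vs by auto
  moreover have "vadd x y 0 = vsum (us @ vs) 0" "vadd x y 1 = vsum (us @ vs) 1"
    using us vs by (simp_all add: vsum_append vadd_def)
  ultimately show "vadd x y \<in> Hd d" unfolding Hd_def by blast
qed

lemma G_in_H: assumes "2 \<le> d" "w \<in> Gset" shows "w \<in> Hd d"
proof -
  have "w \<in> free_elems d" using G_high[OF assms(2)] assms(1) by (auto simp: free_elems_def)
  then show ?thesis unfolding Hd_def using assms(2)
    by (auto intro!: exI[of _ "[w]"] simp: vadd_def vzero_def)
qed

lemma inH_low:
  assumes "x \<in> Hd d" "\<forall>i\<ge>2. x i = 0"
  shows "\<exists>us. set us \<subseteq> Gset \<and> x = vsum us"
proof -
  obtain us where us: "set us \<subseteq> Gset" "x 0 = vsum us 0" "x 1 = vsum us 1" using assms(1) by (auto simp: Hd_def)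
  have "x = vsum us"
  proof
    fix i show "x i = vsum us i"
      using us assms(2) vsum_high[OF us(1), of i] by (cases "i = 0"; cases "i = 1") auto
  qed
  then show ?thesis using us by blast
qed

lemma eq_pointwise:
  fixes f g :: "'a \<Rightarrow> nat"
  shows "(\<forall>x\<in>set xs. f x \<le> g x) \<Longrightarrow> sum_list (map f xs) = sum_list (map g xs) \<Longrightarrow> \<forall>x\<in>set xs. f x = g x"
proof (induction xs)
  case Nil then show ?case by simp
next
  case (Cons y ys)
  have le: "\<forall>x\<in>set ys. f x \<le> g x" "f y \<le> g y" using Cons.prems(1) by simp_all
  have "sum_list (map f ys) \<le> sum_list (map g ys)" using le(1) by (intro sum_list_mono) blast
  moreover have "f y + sum_list (map f ys) = g y + sum_list (map g ys)" using Cons.prems(2) by simp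
  ultimately have fy: "f y = g y" and se: "sum_list (map f ys) = sum_list (map g ys)" using le(2) by linarith+
  have "\<forall>x\<in>set ys. f x = g x" using Cons.IH[OF le(1) se] .
  then show ?case using fy by simp
qed

lemma mem_le_sum: fixes f :: "'a \<Rightarrow> nat" shows "x \<in> set xs \<Longrightarrow> f x \<le> sum_list (map f xs)"
proof (induction xs)
  case Nil then show ?case by simp
next
  case (Cons y ys)
  show ?case
  proof (cases "x = y")
    case True then show ?thesis by simp
  next
    case False then have "x \<in> set ys" using Cons.prems by simp
    then show ?thesis using Cons.IH by simp
  qed
qed

lemma loc:
  assumes ws: "set ws \<subseteq> Gset" and V: "vsum ws = gen c N" and N: "N \<le> Xv c"
  shows "\<exists>gs. ws = map (gen c) gs \<and> set gs \<subseteq> Aset c"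
proof -
  have s0: "sum_list (map (\<lambda>w. w 0) ws) = N"
    using fun_cong[OF V, of 0] by (simp add: vsum_def gen_def)
  have s1: "sum_list (map (\<lambda>w. w 1) ws) = c * N"
    using fun_cong[OF V, of 1] by (simp add: vsum_def gen_def)
  have le: "\<forall>w\<in>set ws. w 1 \<le> c * w 0"
  proof
    fix w assume w: "w \<in> set ws"
    then have wG: "w \<in> Gset" using ws by blast
    note F = G_form[OF wG, THEN conjunct1] G_form[OF wG, THEN conjunct2, THEN conjunct1] G_form[OF wG, THEN conjunct2, THEN conjunct2]
    have "w 0 \<le> N" using mem_le_sum[OF w, of "\<lambda>w. w 0"] s0 by simp
    have "w 1 div w 0 \<le> c"
    proof (rule ccontr)
      assume "\<not> w 1 div w 0 \<le> c"
      then have "Xv c < Bc (w 1 div w 0) * Bc (w 1 div w 0)" using sep by simp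
      also have "\<dots> \<le> w 0" using A_bounds[OF F(2)] by blast
      finally show False using \<open>w 0 \<le> N\<close> N by simp
    qed
    moreover have "w 1 = (w 1 div w 0) * w 0" using fun_cong[OF F(1), of 1] by (simp add: gen_def)
    ultimately show "w 1 \<le> c * w 0" using mult_le_mono1[of "w 1 div w 0" c "w 0"] by simp
  qed
  have "sum_list (map (\<lambda>w. c * w 0) ws) = c * N" using s0 by (simp add: sum_list_const_mult)
  then have eq: "\<forall>w\<in>set ws. w 1 = c * w 0" using eq_pointwise[OF le] s1 by simp
  have "\<forall>w\<in>set ws. w 1 div w 0 = c"
  proof
    fix w assume "w \<in> set ws"
    then have wG: "w \<in> Gset" using ws by blast
    have "0 < w 0" using G_form[OF wG] by blast
    moreover have "w 1 = c * w 0" using eq \<open>w \<in> set ws\<close> by blast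
    ultimately show "w 1 div w 0 = c" by simp
  qed
  then have all: "\<forall>w\<in>set ws. w = gen c (w 0) \<and> w 0 \<in> Aset c"
  proof (intro ballI)
    fix w assume w: "w \<in> set ws" and h: "\<forall>w\<in>set ws. w 1 div w 0 = c"
    then have wG: "w \<in> Gset" using ws by blast
    have "w 1 div w 0 = c" using h w by blast
    then show "w = gen c (w 0) \<and> w 0 \<in> Aset c" using G_form[OF wG] by simp
  qed
  have "map (gen c) (map (\<lambda>w. w 0) ws) = ws"
    unfolding map_map by (rule map_idI) (use all in simp)
  moreover have "set (map (\<lambda>w. w 0) ws) \<subseteq> Aset c" using all by auto
  ultimately show ?thesis by metis
qed

lemma gen_atom:
  assumes d: "2 \<le> d" and g: "g \<in> Aset c"
  shows "gen c g \<in> atoms (Hd d)"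
proof -
  have inG: "gen c g \<in> Gset" using g by (auto simp: Gset_def)
  have inH: "gen c g \<in> Hd d" using G_in_H[OF d inG] .
  have nz: "gen c g \<noteq> vzero" using A_bounds[OF g] gen_nz by blast
  have "a = vzero \<or> b = vzero" if ab: "a \<in> Hd d" "b \<in> Hd d" "gen c g = vadd a b" for a b
  proof -
    have "gen c g i = a i + b i" for i using ab(3) by (simp add: vadd_def)
    moreover have "gen c g i = 0" if "2 \<le> i" for i using that by (simp add: gen_def)
    ultimately have "\<forall>i\<ge>2. a i = 0" "\<forall>i\<ge>2. b i = 0" by (metis add_is_0)+
    then obtain as bs where as: "set as \<subseteq> Gset" "a = vsum as" and bs: "set bs \<subseteq> Gset" "b = vsum bs"
      using inH_low ab by metis
    have "vsum (as @ bs) = gen c g" using as bs ab(3) by (simp add: vsum_append)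
    moreover have "set (as @ bs) \<subseteq> Gset" using as bs by simp
    moreover have "g \<le> Xv c" using A_bounds[OF g] by blast
    ultimately obtain gs where gs: "as @ bs = map (gen c) gs" "set gs \<subseteq> Aset c"
      using loc by blast
    have "gen c (sum_list gs) = gen c g" using gs \<open>vsum (as @ bs) = gen c g\<close> by (simp add: vsum_map_gen)
    then have "sum_list gs = g" by (rule gen_inj)
    then have "length gs = 1" using prim[OF ctx g[unfolded Aset_def] gs(2)[unfolded Aset_def]] by blast
    then have "length (as @ bs) = 1" using gs by simp
    then have "as = [] \<or> bs = []" by (cases as) auto
    then show ?thesis using as bs by auto
  qed
  then show ?thesis using inH nz unfolding atoms_def by blast
qed

lemma atom_low:
  assumes d: "2 \<le> d" and u: "u \<in> atoms (Hd d)" and low: "\<forall>i\<ge>2. u i = 0"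
  shows "u \<in> Gset"
proof -
  have uH: "u \<in> Hd d" "u \<noteq> vzero" using u by (auto simp: atoms_def)
  have ua: "\<forall>a\<in>Hd d. \<forall>b\<in>Hd d. u = vadd a b \<longrightarrow> a = vzero \<or> b = vzero" using u by (simp add: atoms_def)
  obtain us where us: "set us \<subseteq> Gset" "u = vsum us" using inH_low[OF uH(1) low] by blast
  show ?thesis
  proof (cases us)
    case Nil then show ?thesis using us uH by simp
  next
    case (Cons w rest)
    show ?thesis
    proof (cases rest)
      case Nil
      have "u = vadd w vzero" using us \<open>us = w # rest\<close> Nil by simp
      then have "u = w" by (simp add: vadd_def vzero_def)
      then show ?thesis using us \<open>us = w # rest\<close> by simp
    next
      case (Cons v rest')
      have wG: "w \<in> Gset" "v \<in> Gset" "set rest \<subseteq> Gset" using us \<open>us = w # rest\<close> Cons by auto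
      have wH: "w \<in> Hd d" using G_in_H[OF d wG(1)] .
      have "set rest \<subseteq> Hd d" using wG(3) G_in_H[OF d] by blast
      then have rH: "vsum rest \<in> Hd d" using vsum_in[OF Hd_sub[OF d]] by blast
      have w0: "0 < w 0" "0 < v 0" using G_form[OF wG(1)] G_form[OF wG(2)] by blast+
      have wnz: "w \<noteq> vzero"
      proof
        assume "w = vzero" then have "w 0 = 0" by (simp add: vzero_def)
        then show False using w0 by simp
      qed
      have rnz: "vsum rest \<noteq> vzero"
      proof
        assume "vsum rest = vzero"
        then have "vsum rest 0 = 0" by (simp add: vzero_def)
        moreover have "vsum rest 0 = v 0 + vsum rest' 0" using Cons by (simp add: vadd_def)
        ultimately show False using w0 by simp
      qed
      have "u = vadd w (vsum rest)" using us \<open>us = w # rest\<close> by simp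
      then have False using ua wH rH wnz rnz by blast
      then show ?thesis ..
    qed
  qed
qed

lemma lengths_X:
  assumes d: "2 \<le> d"
  shows "gen c (Xv c) \<in> Hd d" "lengths (Hd d) (gen c (Xv c)) = Sset c"
proof -
  obtain s where "s \<in> Sset c" using Sset_props by blast
  then obtain gs0 where gs0: "set gs0 \<subseteq> Aset c" "sum_list gs0 = Xv c"
    using achieve[OF ctx] unfolding Aset_def Xv_def by blast
  have "set (map (gen c) gs0) \<subseteq> Hd d"
    using G_in_H[OF d] gs0(1) by (auto simp: Gset_def)
  then have "vsum (map (gen c) gs0) \<in> Hd d"
    using vsum_in[OF Hd_sub[OF d]] by blast
  then show XH: "gen c (Xv c) \<in> Hd d" using gs0 by (simp add: vsum_map_gen)
  show "lengths (Hd d) (gen c (Xv c)) = Sset c"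
  proof
    show "lengths (Hd d) (gen c (Xv c)) \<subseteq> Sset c"
    proof
      fix k assume "k \<in> lengths (Hd d) (gen c (Xv c))"
      then obtain us where us: "length us = k" "set us \<subseteq> atoms (Hd d)" "vsum us = gen c (Xv c)"
        by (auto simp: lengths_def)
      have "u \<in> Gset" if u: "u \<in> set us" for u
      proof -
        have "\<forall>i\<ge>2. u i = 0"
        proof (intro allI impI)
          fix i assume "2 \<le> (i::nat)"
          have "u i \<le> vsum us i" using mem_le_sum[OF u, of "\<lambda>u. u i"] by (simp add: vsum_def)
          then show "u i = 0" using fun_cong[OF us(3), of i] \<open>2 \<le> i\<close> by (simp add: gen_def)
        qed
        then show ?thesis using atom_low[OF d] us(2) u by blast
      qed
      then obtain gs where gs: "us = map (gen c) gs" "set gs \<subseteq> Aset c"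
        using loc[OF _ us(3)] by blast
      have "gen c (sum_list gs) = gen c (Xv c)" using gs us(3) by (simp add: vsum_map_gen)
      then have "sum_list gs = Xv c" by (rule gen_inj)
      then have "length gs \<in> Sset c" using len_X[OF ctx gs(2)[unfolded Aset_def]] by (simp add: Xv_def)
      then show "k \<in> Sset c" using us gs by simp
    qed
  next
    show "Sset c \<subseteq> lengths (Hd d) (gen c (Xv c))"
    proof
      fix s assume "s \<in> Sset c"
      then obtain gs where gs: "set gs \<subseteq> Aset c" "sum_list gs = Xv c" "length gs = s"
        using achieve[OF ctx] unfolding Aset_def Xv_def by blast
      have "set (map (gen c) gs) \<subseteq> atoms (Hd d)" using gs gen_atom[OF d] by auto
      moreover have "vsum (map (gen c) gs) = gen c (Xv c)" using gs by (simp add: vsum_map_gen)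
      moreover have "length (map (gen c) gs) = s" using gs(3) by simp
      ultimately show "s \<in> lengths (Hd d) (gen c (Xv c))" unfolding lengths_def by blast
    qed
  qed
qed


definition unitv :: "nat \<Rightarrow> nat \<Rightarrow> nat" where "unitv i = (\<lambda>j. if j = i then 1 else 0)"

lemma e_in_A: "Bc c * Bc c \<in> Aset c" by (simp add: Aset_def Aof_def)

lemma unit_in_H: "2 \<le> i \<Longrightarrow> i < d \<Longrightarrow> unitv i \<in> Hd d"
proof -
  assume i: "2 \<le> i" "i < d"
  have "unitv i \<in> free_elems d" using i by (simp add: free_elems_def unitv_def)
  moreover have "unitv i 0 = vsum [] 0" "unitv i 1 = vsum [] 1" using i by (simp_all add: unitv_def vzero_def)
  ultimately show ?thesis unfolding Hd_def
    by (metis (mono_tags, lifting) empty_set empty_subsetI mem_Collect_eq)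
qed

lemma unit_inj: "inj_on unitv A"
proof (rule inj_onI)
  fix x y assume "unitv x = unitv y"
  then have "unitv x x = unitv y x" by simp
  then show "x = y" by (simp add: unitv_def split: if_splits)
qed

lemma rank_part:
  assumes d: "2 \<le> d"
  shows "\<exists>S\<subseteq>Hd d. int_lin_indep S \<and> card S = d"
proof -
  define A0 where "A0 = Bc 0 * Bc 0"
  define A1 where "A1 = Bc 1 * Bc 1"
  define a0 where "a0 = gen 0 A0"
  define a1 where "a1 = gen 1 A1"
  define U where "U = unitv ` {2..<d}"
  define S0 where "S0 = insert a0 (insert a1 U)"
  have p: "0 < Bc c" for c using Bc_pos[of c] by (simp only: One_nat_def Suc_le_eq)
  have A0p: "0 < A0" unfolding A0_def using mult_pos_pos[OF p p] .
  have A1p: "0 < A1" unfolding A1_def using mult_pos_pos[OF p p] .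
  have a0H: "a0 \<in> Hd d" using G_in_H[OF d] e_in_A[of 0] unfolding a0_def A0_def Gset_def by blast
  have a1H: "a1 \<in> Hd d" using G_in_H[OF d] e_in_A[of 1] unfolding a1_def A1_def Gset_def by blast
  have UH: "U \<subseteq> Hd d" unfolding U_def using unit_in_H by auto
  have finU: "finite U" by (simp add: U_def)
  have U0: "u 0 = 0" if "u \<in> U" for u using that by (auto simp: U_def unitv_def)
  have a0U: "a0 \<notin> U"
  proof
    assume "a0 \<in> U" then have "a0 0 = 0" by (rule U0)
    then show False using A0p by (simp add: a0_def gen_def)
  qed
  have a1U: "a1 \<notin> U"
  proof
    assume "a1 \<in> U" then have "a1 0 = 0" by (rule U0)
    then show False using A1p by (simp add: a1_def gen_def)
  qed
  have a01: "a0 \<noteq> a1"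
  proof
    assume "a0 = a1" then have "a0 1 = a1 1" by simp
    then show False using A1p by (simp add: a0_def a1_def gen_def)
  qed
  have cardU: "card U = d - 2" unfolding U_def using card_image[OF unit_inj] by simp
  have card: "card S0 = d" unfolding S0_def using finU a0U a1U a01 cardU d by simp
  have sumU: "(\<Sum>v\<in>U. c v * int (v i)) = (if i \<in> {2..<d} then c (unitv i) else 0)" for c :: "(nat \<Rightarrow> nat) \<Rightarrow> int" and i
  proof -
    have "(\<Sum>v\<in>U. c v * int (v i)) = (\<Sum>j\<in>{2..<d}. c (unitv j) * int (unitv j i))"
      unfolding U_def by (simp add: sum.reindex[OF unit_inj])
    also have "\<dots> = (\<Sum>j\<in>{2..<d}. if j = i then c (unitv j) else 0)"
      by (rule sum.cong) (auto simp: unitv_def)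
    also have "\<dots> = (if i \<in> {2..<d} then c (unitv i) else 0)" by (simp add: sum.delta')
    finally show ?thesis .
  qed
  have sumS: "(\<Sum>v\<in>S0. c v * int (v i)) = c a0 * int (a0 i) + c a1 * int (a1 i) + (if i \<in> {2..<d} then c (unitv i) else 0)"
    for c :: "(nat \<Rightarrow> nat) \<Rightarrow> int" and i
    unfolding S0_def using finU a0U a1U a01 sumU[of c i] by simp
  have indep: "int_lin_indep S0"
    unfolding int_lin_indep_def
  proof (intro conjI allI impI ballI)
    show "finite S0" using finU by (simp add: S0_def)
    fix c :: "(nat \<Rightarrow> nat) \<Rightarrow> int" and v
    assume h: "\<forall>i. (\<Sum>v\<in>S0. c v * int (v i)) = 0" and v: "v \<in> S0"
    have "c a1 * int A1 = 0" using h[rule_format, of 1] sumS[of c 1] by (simp add: a0_def a1_def gen_def)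
    then have c1: "c a1 = 0" using A1p by simp
    have "c a0 * int A0 = 0" using h[rule_format, of 0] sumS[of c 0] c1 by (simp add: a0_def a1_def gen_def)
    then have c0: "c a0 = 0" using A0p by simp
    have cu: "c (unitv j) = 0" if "j \<in> {2..<d}" for j
      using h[rule_format, of j] sumS[of c j] that by (simp add: a0_def a1_def gen_def)
    show "c v = 0" using v c0 c1 cu unfolding S0_def U_def by auto
  qed
  have "S0 \<subseteq> Hd d" unfolding S0_def using a0H a1H UH by simp
  then show ?thesis using indep card by blast
qed

lemma full_system:
  assumes d: "2 \<le> d"
  shows "system_of_lengths (Hd d) = P_fin"
proof
  show "system_of_lengths (Hd d) \<subseteq> P_fin" using system_sub[OF Hd_sub[OF d]] .
  show "P_fin \<subseteq> system_of_lengths (Hd d)"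
  proof
    fix L assume L: "L \<in> P_fin"
    have sm: "submonoid_free d (Hd d)" using Hd_sub[OF d] .
    have z: "{0} \<in> system_of_lengths (Hd d)"
    proof -
      have "vzero \<in> Hd d" using sm by (simp add: submonoid_free_def)
      then show ?thesis using lengths_zero[OF sm] unfolding system_of_lengths_def by (metis imageI)
    qed
    have o: "{1} \<in> system_of_lengths (Hd d)"
    proof -
      have at: "gen 0 (Bc 0 * Bc 0) \<in> atoms (Hd d)" using gen_atom[OF d e_in_A] .
      then have "gen 0 (Bc 0 * Bc 0) \<in> Hd d" using atoms_sub by blast
      then show ?thesis using lengths_atom[OF sm at] unfolding system_of_lengths_def by (metis imageI)
    qed
    show "L \<in> system_of_lengths (Hd d)"
    proof (cases "L = {0} \<or> L = {1}")
      case True then show ?thesis using z o by blast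
    next
      case False
      then have "L \<subseteq> {2..}" "finite L" "L \<noteq> {}" using L unfolding P_fin_def by blast+
      then obtain c where c: "Sset c = L" using Sset_surj by blast
      have "gen c (Xv c) \<in> Hd d" "lengths (Hd d) (gen c (Xv c)) = L" using lengths_X[OF d] c by simp_all
      then show ?thesis unfolding system_of_lengths_def by (metis imageI)
    qed
  qed
qed

theorem corollary4p8:
  fixes d :: nat
  assumes "d \<ge> 2"
  shows "\<exists>n H. submonoid_free n H \<and> has_rank H d \<and> system_of_lengths H = P_fin"
proof -
  have "has_rank (Hd d) d"
    unfolding has_rank_def
  proof (intro conjI allI impI)
    show "\<exists>S\<subseteq>Hd d. int_lin_indep S \<and> card S = d" using rank_part[OF assms] .
    fix S assume S: "S \<subseteq> Hd d" "int_lin_indep S"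
    have "Hd d \<subseteq> free_elems d" by (auto simp: Hd_def)
    then show "card S \<le> d" using rank_le[OF _ S(2)] S(1) by blast
  qed
  then show ?thesis using Hd_sub[OF assms] full_system[OF assms] by blast
qed


end
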